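(* Let $Y=f(\boldsymbol X^\intercal\boldsymbol\beta,\varepsilon)$ with $\boldsymbol X\sim N_p(0,\mathbb{I}_p)$, $\varepsilon$ independent of $\boldsymbol X$, $Y$ continuously distributed, and $\boldsymbol\beta$ with entries in $\{\pm1/\sqrt s,0\}$. For $j\in\operatorname{supp}(\boldsymbol\beta)$ with $\operatorname{Var}(\mathfrak m_j(Y))>0$ define the standardized centered inverse regression curve $\mathfrak m(y)=\operatorname{sign}(\beta_j)\mathfrak m_j(y)/\sqrt{\operatorname{Var}(\mathfrak m_j(Y))}$. Let $\xi>0$ and assume: (i) for every $B>0$, $\lim_{r\to\infty}\sup_{b\in\Pi_r(B)}r^{-1/(2+\xi)}\sum_{i=2}^r|\mathfrak m(b_i)-\mathfrak m(b_{i-1})|=0$; (ii) there exist $B_0>0$ and a non-decreasing function $\widetilde{\mathfrak m}:(B_0,\infty)\to\mathbb R$ such that $|\mathfrak m(x)-\mathfrak m(y)|\le|\widetilde{\mathfrak m}(|x|)-\widetilde{\mathfrak m}(|y|)|$ whenever $x,y\in(-\infty,-B_0)$ or $x,y\in(B_0,+\infty)$, and $\mathbb E[|\widetilde{\mathfrak m}(|Y|)|^{2+\xi}]<\infty$ (where $\widetilde{\mathfrak m}(y):=0$ for $|y|\le B_0$ in this expectation). Then for any fixed $0<l<1<K$, $$\lim_{H\to\infty}\sup_{a\in\mathcal A_H(l,K)}\frac{1}{H^{2/(2+\xi)}}\sum_{h=1}^H\operatorname{Var}[\mathfrak m(Y)\mid a_h<Y\le a_{h+1}]=0.$$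
   Context: $\mathfrak m_j(y)=\mathbb E[\boldsymbol X^j\mid Y=y]$. $\mathcal A_H(l,K)$ denotes the set of all partitions $-\infty=a_1\le a_2\le\dots\le a_{H+1}=+\infty$ of $\mathbb R$ such that $\frac lH\le\mathbb P(a_h\le Y\le a_{h+1})\le\frac KH$ for all $h\in[H]$. For $B>0$, $\Pi_r(B)$ denotes the set of all choices of $r$ points $-B\le b_1\le b_2\le\dots\le b_r\le B$ in $[-B,B]$. *)

theory Defs
  imports "HOL-Probability.Probability"
begin

definition Pi_pts :: "nat \<Rightarrow> real \<Rightarrow> (nat \<Rightarrow> real) set" where
  "Pi_pts r B = {b. (\<forall>i\<in>{1..r}. -B \<le> b i \<and> b i \<le> B) \<and> (\<forall>i\<in>{1..<r}. b i \<le> b (Suc i))}"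

definition A_part :: "'a measure \<Rightarrow> ('a \<Rightarrow> real) \<Rightarrow> nat \<Rightarrow> real \<Rightarrow> real \<Rightarrow> (nat \<Rightarrow> ereal) set" where
  "A_part M Y H l K = {a. a 1 = -\<infinity> \<and> a (Suc H) = \<infinity> \<and>
     (\<forall>h\<in>{1..H}. a h \<le> a (Suc h)) \<and>
     (\<forall>h\<in>{1..H}. l / real H \<le> measure M {\<omega>\<in>space M. a h \<le> ereal (Y \<omega>) \<and> ereal (Y \<omega>) \<le> a (Suc h)}
                \<and> measure M {\<omega>\<in>space M. a h \<le> ereal (Y \<omega>) \<and> ereal (Y \<omega>) \<le> a (Suc h)} \<le> K / real H)}"

definition cond_var_event :: "'a measure \<Rightarrow> ('a \<Rightarrow> real) \<Rightarrow> 'a set \<Rightarrow> real" where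
  "cond_var_event M Z S =
     (let \<mu> = (\<integral>\<omega>. indicator S \<omega> * Z \<omega> \<partial>M) / measure M S
      in (\<integral>\<omega>. indicator S \<omega> * (Z \<omega> - \<mu>)\<^sup>2 \<partial>M) / measure M S)"

end

theory Submission
  imports Defs
begin



lemma abs_le_1_sq: "\<bar>x::real\<bar> \<le> 1 + x\<^sup>2"
proof (cases "\<bar>x\<bar> \<le> 1")
  case True then show ?thesis by (smt (verit) zero_le_power2)
next
  case False
  then have "\<bar>x\<bar> * 1 \<le> \<bar>x\<bar> * \<bar>x\<bar>" by (intro mult_left_mono) auto
  then show ?thesis by (simp add: power2_eq_square abs_mult[symmetric])
qed

lemma cv_bound:
  fixes M :: "'a measure" and Z D :: "'a \<Rightarrow> real"
  assumes P: "prob_space M" and S: "S \<in> sets M" and Spos: "measure M S > 0"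
    and Zm: "Z \<in> borel_measurable M" and Dm: "D \<in> borel_measurable M"
    and Di: "integrable M (\<lambda>\<omega>. indicator S \<omega> * D \<omega>)"
    and bnd: "\<And>\<omega>. \<omega> \<in> S \<Longrightarrow> (Z \<omega> - c)\<^sup>2 \<le> D \<omega>"
  shows "cond_var_event M Z S \<le> (\<integral>\<omega>. indicator S \<omega> * D \<omega> \<partial>M) / measure M S"
proof -
  interpret prob_space M by fact
  define p where "p = measure M S"
  have Ssp: "S \<subseteq> space M" using S sets.sets_into_space by auto
  have ii: "integrable M (indicator S :: 'a \<Rightarrow> real)" using S by (intro integrable_real_indicator) (auto simp: less_top[symmetric])
  have ip: "integral\<^sup>L M (indicator S :: 'a \<Rightarrow> real) = p" using Ssp p_def by (simp add: Int_absorb2)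
  define f1 where "f1 = (\<lambda>\<omega>. indicator S \<omega> * (Z \<omega> - c)\<^sup>2)"
  define f2 where "f2 = (\<lambda>\<omega>. indicator S \<omega> * (Z \<omega> - c))"
  have i1: "integrable M f1"
    apply (rule Bochner_Integration.integrable_bound[OF Di])
    using S Zm apply (simp add: f1_def)
    apply (rule AE_I2)
    using bnd by (auto simp: f1_def indicator_def) (smt (verit) zero_le_power2)
  have i2: "integrable M f2"
  proof (rule Bochner_Integration.integrable_bound[where f="\<lambda>\<omega>. indicator S \<omega> + f1 \<omega>"])
    show "integrable M (\<lambda>\<omega>. indicator S \<omega> + f1 \<omega>)"
      by (rule Bochner_Integration.integrable_add[OF ii i1])
    show "f2 \<in> borel_measurable M" using S Zm by (simp add: f2_def)
    show "AE x in M. norm (f2 x) \<le> norm (indicator S x + f1 x)"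
    proof (rule AE_I2)
      fix x assume "x \<in> space M"
      show "norm (f2 x) \<le> norm (indicator S x + f1 x)"
      proof (cases "x \<in> S")
        case True
        then show ?thesis using abs_le_1_sq[of "Z x - c"] by (simp add: f1_def f2_def)
      next
        case False
        then show ?thesis by (simp add: f1_def f2_def)
      qed
    qed
  qed
  have iZ: "integrable M (\<lambda>\<omega>. indicator S \<omega> * Z \<omega>)"
  proof -
    have "integrable M (\<lambda>\<omega>. f2 \<omega> + c * indicator S \<omega>)" using i2 ii by auto
    moreover have "(\<lambda>\<omega>. f2 \<omega> + c * indicator S \<omega>) = (\<lambda>\<omega>. indicator S \<omega> * Z \<omega>)"
      by (auto simp: f2_def algebra_simps)
    ultimately show ?thesis by simp
  qed
  define \<mu> where "\<mu> = (\<integral>\<omega>. indicator S \<omega> * Z \<omega> \<partial>M) / p"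
  have e2: "integral\<^sup>L M f2 = (\<mu> - c) * p"
  proof -
    have "f2 = (\<lambda>\<omega>. indicator S \<omega> * Z \<omega> - c * indicator S \<omega>)"
      by (auto simp: f2_def algebra_simps)
    then have "integral\<^sup>L M f2 = (\<integral>\<omega>. indicator S \<omega> * Z \<omega> \<partial>M) - c * p"
      using iZ ii ip by simp
    then show ?thesis using Spos p_def \<mu>_def by (simp add: field_simps)
  qed
  have eq: "(\<lambda>\<omega>. indicator S \<omega> * (Z \<omega> - \<mu>)\<^sup>2) =
       (\<lambda>\<omega>. f1 \<omega> - (2 * (\<mu> - c)) * f2 \<omega> + (\<mu> - c)\<^sup>2 * indicator S \<omega>)"
    by (auto simp: f1_def f2_def indicator_def power2_eq_square algebra_simps)
  have "(\<integral>\<omega>. indicator S \<omega> * (Z \<omega> - \<mu>)\<^sup>2 \<partial>M) =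
        integral\<^sup>L M f1 - (2 * (\<mu> - c)) * integral\<^sup>L M f2 + (\<mu> - c)\<^sup>2 * p"
    unfolding eq using i1 i2 ii ip by simp
  also have "\<dots> = integral\<^sup>L M f1 - (\<mu> - c)\<^sup>2 * p" unfolding e2 by (simp add: power2_eq_square)
  also have "\<dots> \<le> integral\<^sup>L M f1" using Spos p_def by simp
  also have "\<dots> \<le> (\<integral>\<omega>. indicator S \<omega> * D \<omega> \<partial>M)"
    apply (rule integral_mono[OF i1 Di])
    using bnd by (auto simp: f1_def indicator_def)
  finally have "(\<integral>\<omega>. indicator S \<omega> * (Z \<omega> - \<mu>)\<^sup>2 \<partial>M) \<le> (\<integral>\<omega>. indicator S \<omega> * D \<omega> \<partial>M)" .
  then show ?thesis unfolding cond_var_event_def Let_def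
    using Spos unfolding \<mu>_def p_def by (simp add: divide_right_mono)
qed



lemma ui_small:
  fixes M :: "'a measure" and F :: "'a \<Rightarrow> real"
  assumes P: "prob_space M" and Fi: "integrable M F" and F0: "\<And>x. x \<in> space M \<Longrightarrow> 0 \<le> F x"
    and eta: "\<eta> > 0"
  shows "\<exists>\<rho>>0. \<forall>A\<in>sets M. measure M A \<le> \<rho> \<longrightarrow> (\<integral>x. indicator A x * F x \<partial>M) \<le> \<eta>"
proof -
  interpret prob_space M by fact
  define s where "s = (\<lambda>(n::nat) x. F x - min (F x) (real n))"
  have Fm: "F \<in> borel_measurable M" using Fi by auto
  have sm: "\<And>n. s n \<in> borel_measurable M" unfolding s_def using Fm by measurable
  have lim: "AE x in M. (\<lambda>n. s n x) \<longlonglongrightarrow> 0"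
  proof (rule AE_I2)
    fix x
    have "eventually (\<lambda>n. s n x = 0) sequentially"
    proof -
      obtain N :: nat where "F x \<le> real N" using real_arch_simple by blast
      then have "\<forall>n\<ge>N. s n x = 0" unfolding s_def
        by (smt (verit) of_nat_mono)
      then show ?thesis unfolding eventually_sequentially by blast
    qed
    then show "(\<lambda>n. s n x) \<longlonglongrightarrow> 0" by (simp add: tendsto_eventually)
  qed
  have bnd: "\<And>n. AE x in M. norm (s n x) \<le> F x"
    using F0 unfolding s_def by (intro AE_I2) auto
  have si: "\<And>n. integrable M (s n)"
    by (rule integrable_dominated_convergence2[OF _ sm Fi lim bnd]) simp
  have "(\<lambda>n. integral\<^sup>L M (s n)) \<longlonglongrightarrow> integral\<^sup>L M (\<lambda>x. 0::real)"
    by (rule integral_dominated_convergence[OF _ sm Fi lim bnd]) simp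
  then have "(\<lambda>n. integral\<^sup>L M (s n)) \<longlonglongrightarrow> 0" by simp
  then obtain N where N: "integral\<^sup>L M (s N) < \<eta>/2"
    using eta by (metis half_gt_zero_iff order_tendstoD(2) eventually_sequentially order_refl)
  define \<rho> where "\<rho> = \<eta> / (2 * (real N + 1))"
  have rpos: "\<rho> > 0" using eta by (simp add: \<rho>_def)
  have "\<forall>A\<in>sets M. measure M A \<le> \<rho> \<longrightarrow> (\<integral>x. indicator A x * F x \<partial>M) \<le> \<eta>"
  proof (intro ballI impI)
    fix A assume A: "A \<in> sets M" and PA: "measure M A \<le> \<rho>"
    have iA: "integrable M (indicator A :: 'a \<Rightarrow> real)"
      using A by (intro integrable_real_indicator) (auto simp: less_top[symmetric])
    have iAF: "integrable M (\<lambda>x. indicator A x * F x)"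
      using integrable_mult_indicator[OF A Fi] by simp
    have "(\<integral>x. indicator A x * F x \<partial>M) \<le> (\<integral>x. real N * indicator A x + s N x \<partial>M)"
    proof (rule integral_mono[OF iAF])
      show "integrable M (\<lambda>x. real N * indicator A x + s N x)" using iA si by auto
      fix x assume "x \<in> space M"
      then show "indicator A x * F x \<le> real N * indicator A x + s N x"
        using F0[of x] unfolding s_def by (auto simp: indicator_def)
    qed
    also have "\<dots> = real N * measure M A + integral\<^sup>L M (s N)"
      using iA si A by (simp add: Int_absorb2 sets.sets_into_space)
    also have "\<dots> \<le> real N * \<rho> + \<eta>/2" using PA N by (intro add_mono mult_left_mono) auto
    also have "\<dots> \<le> \<eta>"
    proof -
      have "real N * \<rho> \<le> (real N + 1) * \<rho>" using rpos by (intro mult_right_mono) auto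
      also have "\<dots> = \<eta>/2" unfolding \<rho>_def by (simp add: field_simps)
      finally show ?thesis by simp
    qed
    finally show "(\<integral>x. indicator A x * F x \<partial>M) \<le> \<eta>" .
  qed
  then show ?thesis using rpos by blast
qed



definition clamp :: "real \<Rightarrow> real \<Rightarrow> real" where "clamp B x = max (-B) (min B x)"

lemma clamp_mono: "x \<le> y \<Longrightarrow> clamp B x \<le> clamp B y"
  by (auto simp: clamp_def)

lemma clamp_range: "0 \<le> B \<Longrightarrow> -B \<le> clamp B x \<and> clamp B x \<le> B"
  by (auto simp: clamp_def)

lemma mid_sum:
  fixes \<alpha> y :: "nat \<Rightarrow> real" and m :: "real \<Rightarrow> real"
  assumes ay: "\<forall>h\<in>{2..n+1}. \<alpha> h \<le> y h \<and> y h \<le> \<alpha> (h+1)" and B: "0 \<le> B"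
  defines "b \<equiv> (\<lambda>i. if even i then clamp B (\<alpha> (i div 2 + 2)) else clamp B (y ((i+1) div 2 + 1)))"
  shows "b \<in> Pi_pts (2*n) B"
    and "(\<Sum>h=2..n+1. \<bar>m (clamp B (\<alpha> (h+1))) - m (clamp B (y h))\<bar>)
          \<le> (\<Sum>i=2..2*n. \<bar>m (b i) - m (b (i - 1))\<bar>)"
proof -
  show "b \<in> Pi_pts (2*n) B"
    unfolding Pi_pts_def
  proof (intro CollectI conjI ballI)
    fix i assume "i \<in> {1..2*n}"
    show "- B \<le> b i" "b i \<le> B" using clamp_range[OF B] unfolding b_def by auto
  next
    fix i assume i: "i \<in> {1..<2*n}"
    show "b i \<le> b (Suc i)"
    proof (cases "even i")
      case True
      then obtain k where k: "i = 2*k" by (auto elim: evenE)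
      with i have "1 \<le> k" "k + 1 \<le> n" by auto
      then have "\<alpha> (k+2) \<le> y (k+2)" using ay by auto
      then show ?thesis using k unfolding b_def by (auto intro: clamp_mono)
    next
      case False
      then obtain k where k: "i = 2*k + 1" by (auto elim: oddE)
      with i have "k + 1 \<le> n" by auto
      then have "y (k+1+1) \<le> \<alpha> (k+1+1+1)" using ay by auto
      moreover have "b i = clamp B (y (k+2))"
      proof -
        have "odd i" "(i+1) div 2 + 1 = k + 2" using k by auto
        then show ?thesis unfolding b_def by simp
      qed
      moreover have "b (Suc i) = clamp B (\<alpha> (k+3))"
      proof -
        have "even (Suc i)" "Suc i div 2 + 2 = k + 3" using k by auto
        then show ?thesis unfolding b_def by (simp only: if_True)
      qed
      ultimately show ?thesis by (auto intro: clamp_mono simp: numeral_3_eq_3 numeral_2_eq_2)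
    qed
  qed
  have "(\<Sum>h=2..n+1. \<bar>m (clamp B (\<alpha> (h+1))) - m (clamp B (y h))\<bar>)
       = (\<Sum>k=1..n. \<bar>m (b (2*k)) - m (b (2*k - 1))\<bar>)"
  proof -
    have "(\<Sum>h=2..n+1. \<bar>m (clamp B (\<alpha> (h+1))) - m (clamp B (y h))\<bar>)
        = (\<Sum>k=1..n. \<bar>m (clamp B (\<alpha> (k+2))) - m (clamp B (y (k+1)))\<bar>)"
      by (rule sum.reindex_bij_witness[where i="\<lambda>k. k+1" and j="\<lambda>h. h-1"]) auto
    also have "\<dots> = (\<Sum>k=1..n. \<bar>m (b (2*k)) - m (b (2*k - 1))\<bar>)"
    proof (rule sum.cong[OF refl])
      fix k assume "k \<in> {1..n}"
      then have "odd (2*k - 1)" "(2*k - 1 + 1) div 2 + 1 = k + 1" by auto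
      then show "\<bar>m (clamp B (\<alpha> (k+2))) - m (clamp B (y (k+1)))\<bar> = \<bar>m (b (2*k)) - m (b (2*k - 1))\<bar>"
        unfolding b_def by auto
    qed
    finally show ?thesis .
  qed
  also have "\<dots> = (\<Sum>i\<in>(\<lambda>k. 2*k) ` {1..n}. \<bar>m (b i) - m (b (i - 1))\<bar>)"
    by (subst sum.reindex) (auto simp: inj_on_def)
  also have "\<dots> \<le> (\<Sum>i=2..2*n. \<bar>m (b i) - m (b (i - 1))\<bar>)"
    by (rule sum_mono2) auto
  finally show "(\<Sum>h=2..n+1. \<bar>m (clamp B (\<alpha> (h+1))) - m (clamp B (y h))\<bar>)
          \<le> (\<Sum>i=2..2*n. \<bar>m (b i) - m (b (i - 1))\<bar>)" .
qed

lemma sumsq_le: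
  fixes x :: "nat \<Rightarrow> real"
  assumes "finite I" "\<And>i. i \<in> I \<Longrightarrow> 0 \<le> x i"
  shows "(\<Sum>i\<in>I. (x i)\<^sup>2) \<le> (\<Sum>i\<in>I. x i)\<^sup>2"
proof -
  have "(\<Sum>i\<in>I. (x i)\<^sup>2) \<le> (\<Sum>i\<in>I. x i * (\<Sum>j\<in>I. x j))"
  proof (rule sum_mono)
    fix i assume i: "i \<in> I"
    have "x i \<le> (\<Sum>j\<in>I. x j)" using assms i by (intro member_le_sum) auto
    then show "(x i)\<^sup>2 \<le> x i * (\<Sum>j\<in>I. x j)" using assms(2)[OF i]
      by (simp add: power2_eq_square mult_left_mono)
  qed
  also have "\<dots> = (\<Sum>i\<in>I. x i)\<^sup>2" by (simp add: power2_eq_square sum_distrib_right)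
  finally show ?thesis .
qed





lemma key_bound:
  fixes m mt :: "real \<Rightarrow> real"
  assumes BB: "B0 < B" "0 < B0"
    and mono: "mono_on {B0<..} mt"
    and tail: "\<forall>x y. ((x < - B0 \<and> y < - B0) \<or> (x > B0 \<and> y > B0)) \<longrightarrow>
                          \<bar>m x - m y\<bar> \<le> \<bar>mt \<bar>x\<bar> - mt \<bar>y\<bar>\<bar>"
    and xy: "x \<le> y"
  shows "\<bar>m x - m y\<bar> \<le> \<bar>m (clamp B x) - m (clamp B y)\<bar> + (mt (max y B) - mt (max x B))
            + (mt (max (-x) B) - mt (max (-y) B))"
proof -
  have mo: "\<And>a b. B \<le> a \<Longrightarrow> a \<le> b \<Longrightarrow> mt a \<le> mt b"
    using mono BB by (auto simp: mono_on_def)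
  have H3: "\<And>a b. B < a \<Longrightarrow> a \<le> b \<Longrightarrow> \<bar>m a - m b\<bar> \<le> mt b - mt a"
  proof -
    fix a b assume "B < a" "a \<le> b"
    then have "\<bar>m a - m b\<bar> \<le> \<bar>mt \<bar>a\<bar> - mt \<bar>b\<bar>\<bar>" using tail BB by auto
    moreover have "mt a \<le> mt b" using mo \<open>B < a\<close> \<open>a \<le> b\<close> by auto
    ultimately show "\<bar>m a - m b\<bar> \<le> mt b - mt a" using \<open>B < a\<close> \<open>a \<le> b\<close> BB by auto
  qed
  have H4: "\<And>a b. b < -B \<Longrightarrow> a \<le> b \<Longrightarrow> \<bar>m a - m b\<bar> \<le> mt (-a) - mt (-b)"
  proof -
    fix a b assume "b < -B" "a \<le> b"
    then have "\<bar>m a - m b\<bar> \<le> \<bar>mt \<bar>a\<bar> - mt \<bar>b\<bar>\<bar>" using tail BB by auto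
    moreover have "mt (-b) \<le> mt (-a)" using mo \<open>b < -B\<close> \<open>a \<le> b\<close> by auto
    ultimately show "\<bar>m a - m b\<bar> \<le> mt (-a) - mt (-b)" using \<open>b < -B\<close> \<open>a \<le> b\<close> BB by auto
  qed
  have H1: "\<And>z. B < z \<Longrightarrow> \<bar>m B - m z\<bar> \<le> mt z - mt B"
  proof -
    fix z assume z: "B < z"
    have "\<bar>m B - m z\<bar> \<le> \<bar>mt \<bar>B\<bar> - mt \<bar>z\<bar>\<bar>" using tail BB z by auto
    moreover have "mt B \<le> mt z" using mo z by auto
    ultimately show "\<bar>m B - m z\<bar> \<le> mt z - mt B" using z BB by auto
  qed
  have H2: "\<And>z. z < -B \<Longrightarrow> \<bar>m z - m (-B)\<bar> \<le> mt (-z) - mt B"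
  proof -
    fix z assume z: "z < -B"
    have "\<bar>m z - m (-B)\<bar> \<le> \<bar>mt \<bar>z\<bar> - mt \<bar>-B\<bar>\<bar>" using tail[rule_format, of z "-B"] BB z by auto
    moreover have "mt B \<le> mt (-z)" using mo z by auto
    ultimately show "\<bar>m z - m (-B)\<bar> \<le> mt (-z) - mt B" using z BB by auto
  qed
  have Bp: "0 < B" using BB by auto
  consider "y < -B" | "x < -B" "-B \<le> y" "y \<le> B" | "x < -B" "B < y"
    | "-B \<le> x" "y \<le> B" | "-B \<le> x" "x \<le> B" "B < y" | "B < x"
    using xy by linarith
  then show ?thesis
  proof cases
    case 1
    have c: "max y B = B" "max x B = B" "max (-x) B = -x" "max (-y) B = -y"
      using 1 xy Bp by auto
    show ?thesis unfolding c using H4[OF 1 xy] by linarith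
  next
    case 2
    have c: "clamp B x = -B" "clamp B y = y" "max y B = B" "max x B = B" "max (-x) B = -x" "max (-y) B = B"
      using 2 xy Bp by (auto simp: clamp_def)
    have "\<bar>m x - m y\<bar> \<le> \<bar>m x - m (-B)\<bar> + \<bar>m (-B) - m y\<bar>" by linarith
    then show ?thesis unfolding c using H2[OF 2(1)] by linarith
  next
    case 3
    have c: "clamp B x = -B" "clamp B y = B" "max y B = y" "max x B = B" "max (-x) B = -x" "max (-y) B = B"
      using 3 xy Bp by (auto simp: clamp_def)
    have "\<bar>m x - m y\<bar> \<le> \<bar>m x - m (-B)\<bar> + \<bar>m (-B) - m B\<bar> + \<bar>m B - m y\<bar>" by linarith
    then show ?thesis unfolding c using H2[OF 3(1)] H1[OF 3(2)] by linarith
  next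
    case 4
    have c: "clamp B x = x" "clamp B y = y" "max y B = B" "max x B = B" "max (-x) B = B" "max (-y) B = B"
      using 4 xy Bp by (auto simp: clamp_def)
    show ?thesis unfolding c by linarith
  next
    case 5
    have c: "clamp B x = x" "clamp B y = B" "max y B = y" "max x B = B" "max (-x) B = B" "max (-y) B = B"
      using 5 xy Bp by (auto simp: clamp_def)
    have "\<bar>m x - m y\<bar> \<le> \<bar>m x - m B\<bar> + \<bar>m B - m y\<bar>" by linarith
    then show ?thesis unfolding c using H1[OF 5(3)] by linarith
  next
    case 6
    have c: "clamp B x = B" "clamp B y = B" "max y B = y" "max x B = x" "max (-x) B = B" "max (-y) B = B"
      using 6 xy Bp by (auto simp: clamp_def)
    show ?thesis unfolding c using H3[OF 6 xy] by linarith
  qed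
qed


lemma sq3: "(a + b + c)\<^sup>2 \<le> 3 * (a\<^sup>2 + b\<^sup>2 + (c::real)\<^sup>2)"
proof -
  have "0 \<le> (a - b)\<^sup>2 + (b - c)\<^sup>2 + (a - c)\<^sup>2" by simp
  then show ?thesis by (simp add: power2_eq_square algebra_simps)
qed




theorem proposition1:
  fixes M :: "'a measure" and E :: "'e measure"
    and X :: "'a \<Rightarrow> real ^ 'p" and \<epsilon> :: "'a \<Rightarrow> 'e"
    and f :: "real \<Rightarrow> 'e \<Rightarrow> real" and Y :: "'a \<Rightarrow> real"
    and \<beta> :: "real ^ 'p" and s :: nat and j :: 'p
    and mj m :: "real \<Rightarrow> real" and \<xi> l K :: real
  assumes "prob_space M"
    and X_rv: "X \<in> borel_measurable M"
    and X_indep: "prob_space.indep_vars M (\<lambda>_. borel) (\<lambda>i \<omega>. X \<omega> $ i) UNIV"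
    and X_normal: "\<forall>i. distributed M lborel (\<lambda>\<omega>. X \<omega> $ i) std_normal_density"
    and eps_rv: "\<epsilon> \<in> measurable M E"
    and indep: "prob_space.indep_set M {X -` A \<inter> space M | A. A \<in> sets borel}
                                        {\<epsilon> -` A \<inter> space M | A. A \<in> sets E}"
    and f_meas: "case_prod f \<in> borel_measurable (borel \<Otimes>\<^sub>M E)"
    and Y_def: "\<forall>\<omega>\<in>space M. Y \<omega> = f (X \<omega> \<bullet> \<beta>) (\<epsilon> \<omega>)"
    and Y_cont: "\<forall>y. measure M {\<omega>\<in>space M. Y \<omega> = y} = 0"
    and s_pos: "s > 0"
    and s_card: "card {i. \<beta> $ i \<noteq> 0} = s"
    and beta_entries: "\<forall>i. \<beta> $ i \<in> {1 / sqrt (real s), - 1 / sqrt (real s), 0}"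
    and j_supp: "\<beta> $ j \<noteq> 0"
    and mj_meas: "mj \<in> borel_measurable borel"
    and mj_ce: "AE \<omega> in M. mj (Y \<omega>) =
                 real_cond_exp M (vimage_algebra (space M) Y borel) (\<lambda>\<omega>. X \<omega> $ j) \<omega>"
    and var_pos: "prob_space.variance M (\<lambda>\<omega>. mj (Y \<omega>)) > 0"
    and m_def: "m = (\<lambda>y. sgn (\<beta> $ j) * mj y / sqrt (prob_space.variance M (\<lambda>\<omega>. mj (Y \<omega>))))"
    and xi_pos: "\<xi> > 0"
    and cond_i: "\<forall>B>0. \<forall>e>0. \<exists>R. \<forall>r\<ge>R. \<forall>b\<in>Pi_pts r B.
                   real r powr (- 1 / (2 + \<xi>)) * (\<Sum>i=2..r. \<bar>m (b i) - m (b (i - 1))\<bar>) \<le> e"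
    and cond_ii: "\<exists>B0>0. \<exists>mt :: real \<Rightarrow> real.
                   mono_on {B0<..} mt \<and>
                   (\<forall>x y. ((x < - B0 \<and> y < - B0) \<or> (x > B0 \<and> y > B0)) \<longrightarrow>
                          \<bar>m x - m y\<bar> \<le> \<bar>mt \<bar>x\<bar> - mt \<bar>y\<bar>\<bar>) \<and>
                   integrable M (\<lambda>\<omega>. \<bar>(if \<bar>Y \<omega>\<bar> \<le> B0 then 0 else mt \<bar>Y \<omega>\<bar>)\<bar> powr (2 + \<xi>))"
    and l_pos: "0 < l" and l_lt: "l < 1" and K_gt: "1 < K"
  shows "\<forall>e>0. \<exists>H0. \<forall>H\<ge>H0. \<forall>a\<in>A_part M Y H l K.
           real H powr (- 2 / (2 + \<xi>)) *
           (\<Sum>h=1..H. cond_var_event M (\<lambda>\<omega>. m (Y \<omega>))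
                {\<omega>\<in>space M. a h < ereal (Y \<omega>) \<and> ereal (Y \<omega>) \<le> a (Suc h)}) \<le> e"
proof (intro allI impI)
  fix e :: real assume e: "e > 0"
  interpret P: prob_space M by fact
  define q where "q = 2 + \<xi>"
  have q2: "q > 2" "q > 0" using xi_pos by (auto simp: q_def)
  obtain B0 mt where B0: "B0 > 0" and mtmono: "mono_on {B0<..} mt"
    and tail: "\<forall>x y. ((x < - B0 \<and> y < - B0) \<or> (x > B0 \<and> y > B0)) \<longrightarrow>
                          \<bar>m x - m y\<bar> \<le> \<bar>mt \<bar>x\<bar> - mt \<bar>y\<bar>\<bar>"
    and Gint: "integrable M (\<lambda>\<omega>. \<bar>(if \<bar>Y \<omega>\<bar> \<le> B0 then 0 else mt \<bar>Y \<omega>\<bar>)\<bar> powr q)"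
    using cond_ii unfolding q_def by blast
  define B where "B = B0 + 1"
  have BB: "B0 < B" "0 < B" using B0 by (auto simp: B_def)
  have Ym: "Y \<in> borel_measurable M"
  proof -
    have "(\<lambda>\<omega>. (X \<omega> \<bullet> \<beta>, \<epsilon> \<omega>)) \<in> measurable M (borel \<Otimes>\<^sub>M E)"
      using X_rv eps_rv by measurable
    from measurable_compose[OF this f_meas]
    have "(\<lambda>\<omega>. f (X \<omega> \<bullet> \<beta>) (\<epsilon> \<omega>)) \<in> borel_measurable M" by simp
    then show ?thesis using Y_def by (subst measurable_cong[where g="\<lambda>\<omega>. f (X \<omega> \<bullet> \<beta>) (\<epsilon> \<omega>)"]) auto
  qed
  have mm: "m \<in> borel_measurable borel" unfolding m_def using mj_meas by measurable
  have Zm: "(\<lambda>\<omega>. m (Y \<omega>)) \<in> borel_measurable M" using measurable_compose[OF Ym mm] by simp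
  obtain Osc where O0: "Osc \<ge> 0" and Ob: "\<And>x y. \<bar>m (clamp B x) - m (clamp B y)\<bar> \<le> Osc"
  proof -
    obtain R1 :: nat where R1: "\<forall>r\<ge>R1. \<forall>b\<in>Pi_pts r B.
                   real r powr (- 1 / (2 + \<xi>)) * (\<Sum>i=2..r. \<bar>m (b i) - m (b (i - 1))\<bar>) \<le> 1"
      using cond_i BB by (meson zero_less_one)
    define r0 where "r0 = max R1 2"
    have r0: "r0 \<ge> R1" "r0 \<ge> 2" by (auto simp: r0_def)
    have main: "\<bar>m y - m x\<bar> \<le> real r0 powr (1/q)" if xy: "x \<le> y" "-B \<le> x" "y \<le> B" for x y
    proof -
      define b where "b = (\<lambda>i::nat. if i = 1 then x else y)"
      have bP: "b \<in> Pi_pts r0 B" using xy unfolding Pi_pts_def b_def by auto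
      have "(\<Sum>i=2..r0. \<bar>m (b i) - m (b (i - 1))\<bar>) = (\<Sum>i=2..r0. if i = 2 then \<bar>m y - m x\<bar> else 0)"
      proof (rule sum.cong[OF refl])
        fix i assume "i \<in> {2..r0}"
        then show "\<bar>m (b i) - m (b (i - 1))\<bar> = (if i = 2 then \<bar>m y - m x\<bar> else 0)"
          by (auto simp: b_def)
      qed
      also have "\<dots> = \<bar>m y - m x\<bar>" using r0 by (simp add: sum.delta)
      finally have "real r0 powr (- 1 / (2 + \<xi>)) * \<bar>m y - m x\<bar> \<le> 1" using R1 r0 bP by metis
      then have "real r0 powr (- (1/q)) * \<bar>m y - m x\<bar> \<le> 1" by (simp add: q_def)
      then have "\<bar>m y - m x\<bar> / real r0 powr (1/q) \<le> 1" by (simp add: powr_minus_divide)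
      moreover have "real r0 powr (1/q) > 0" using r0 by simp
      ultimately show ?thesis by (simp add: divide_le_eq)
    qed
    show ?thesis
    proof (rule that[of "real r0 powr (1/q)"])
      show "0 \<le> real r0 powr (1/q)" by simp
      fix x y
      show "\<bar>m (clamp B x) - m (clamp B y)\<bar> \<le> real r0 powr (1/q)"
      proof (cases "clamp B x \<le> clamp B y")
        case True
        then show ?thesis using main[OF True] clamp_range[of B x] clamp_range[of B y] BB
          by (simp add: abs_minus_commute)
      next
        case False
        then show ?thesis using main[of "clamp B y" "clamp B x"] clamp_range[of B x] clamp_range[of B y] BB
          by simp
      qed
    qed
  qed
  define \<phi> where "\<phi> = (\<lambda>x. mt (max x B))"
  have \<phi>mono: "mono \<phi>"
    unfolding \<phi>_def mono_def using BB by (auto intro!: mono_onD[OF mtmono])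
  have \<phi>ge: "\<And>x. mt B \<le> \<phi> x"
    unfolding \<phi>_def using BB by (auto intro!: mono_onD[OF mtmono])
  have \<phi>m: "\<phi> \<in> borel_measurable borel" using borel_measurable_mono[OF \<phi>mono] .
  define V where "V = (\<lambda>\<omega>. \<phi> \<bar>Y \<omega>\<bar> - mt B)"
  have V0: "\<And>\<omega>. V \<omega> \<ge> 0" using \<phi>ge by (simp add: V_def)
  have Vm: "V \<in> borel_measurable M"
    unfolding V_def using measurable_compose[OF _ \<phi>m, of "\<lambda>\<omega>. \<bar>Y \<omega>\<bar>"] Ym by measurable
  have Vqi: "integrable M (\<lambda>\<omega>. V \<omega> powr q)"
  proof (rule Bochner_Integration.integrable_bound[where f="\<lambda>\<omega>. 2 powr q *
        (\<bar>(if \<bar>Y \<omega>\<bar> \<le> B0 then 0 else mt \<bar>Y \<omega>\<bar>)\<bar> powr q + \<bar>mt B\<bar> powr q)"])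
    show "integrable M (\<lambda>\<omega>. 2 powr q *
        (\<bar>(if \<bar>Y \<omega>\<bar> \<le> B0 then 0 else mt \<bar>Y \<omega>\<bar>)\<bar> powr q + \<bar>mt B\<bar> powr q))"
      using Gint by auto
    show "(\<lambda>\<omega>. V \<omega> powr q) \<in> borel_measurable M" using Vm by measurable
    show "AE \<omega> in M. norm (V \<omega> powr q) \<le> norm (2 powr q *
        (\<bar>(if \<bar>Y \<omega>\<bar> \<le> B0 then 0 else mt \<bar>Y \<omega>\<bar>)\<bar> powr q + \<bar>mt B\<bar> powr q))"
    proof (rule AE_I2)
      fix \<omega>
      define G where "G = \<bar>(if \<bar>Y \<omega>\<bar> \<le> B0 then 0 else mt \<bar>Y \<omega>\<bar>)\<bar>"
      have rhs: "norm (2 powr q * (G powr q + \<bar>mt B\<bar> powr q)) = 2 powr q * (G powr q + \<bar>mt B\<bar> powr q)"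
        by simp
      have "V \<omega> powr q \<le> 2 powr q * (G powr q + \<bar>mt B\<bar> powr q)"
      proof (cases "\<bar>Y \<omega>\<bar> \<le> B")
        case True
        then have "V \<omega> = 0" by (simp add: V_def \<phi>_def max_def)
        then show ?thesis by simp
      next
        case False
        then have Gv: "G = \<bar>mt \<bar>Y \<omega>\<bar>\<bar>" using BB by (simp add: G_def)
        have Vv: "V \<omega> = mt \<bar>Y \<omega>\<bar> - mt B" using False by (simp add: V_def \<phi>_def max_def)
        have "V \<omega> \<le> 2 * max G \<bar>mt B\<bar>" unfolding Vv Gv by linarith
        then have "V \<omega> powr q \<le> (2 * max G \<bar>mt B\<bar>) powr q"
          using V0 q2 by (intro powr_mono2) auto
        also have "\<dots> = 2 powr q * (max G \<bar>mt B\<bar>) powr q"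
          by (rule powr_mult)
        also have "\<dots> \<le> 2 powr q * (G powr q + \<bar>mt B\<bar> powr q)"
          by (intro mult_left_mono) (auto simp: max_def)
        finally show ?thesis .
      qed
      then show "norm (V \<omega> powr q) \<le> norm (2 powr q * (G powr q + \<bar>mt B\<bar> powr q))"
        unfolding rhs by simp
    qed
  qed
  have Vq0: "\<And>\<omega>. 0 \<le> V \<omega> powr q" by simp
  have V2le: "\<And>\<omega>. (V \<omega>)\<^sup>2 \<le> 1 + V \<omega> powr q"
  proof -
    fix \<omega>
    show "(V \<omega>)\<^sup>2 \<le> 1 + V \<omega> powr q"
    proof (cases "V \<omega> \<le> 1")
      case True
      then have "(V \<omega>)\<^sup>2 \<le> 1" using V0[of \<omega>] by (simp add: power_le_one)
      then show ?thesis using Vq0[of \<omega>] by linarith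
    next
      case False
      then have "(V \<omega>)\<^sup>2 = V \<omega> powr (real 2)" by (subst powr_realpow) auto
      also have "\<dots> \<le> V \<omega> powr q" using False q2 by (intro powr_mono) auto
      finally show ?thesis by simp
    qed
  qed
  have V2i: "integrable M (\<lambda>\<omega>. (V \<omega>)\<^sup>2)"
  proof (rule Bochner_Integration.integrable_bound[where f="\<lambda>\<omega>. 1 + V \<omega> powr q"])
    show "integrable M (\<lambda>\<omega>. 1 + V \<omega> powr q)" using Vqi by auto
    show "(\<lambda>\<omega>. (V \<omega>)\<^sup>2) \<in> borel_measurable M" using Vm by measurable
    show "AE \<omega> in M. norm ((V \<omega>)\<^sup>2) \<le> norm (1 + V \<omega> powr q)"
      using V2le Vq0 by (intro AE_I2) (auto simp: abs_of_nonneg add_nonneg_nonneg)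
  qed
  define s where "s = sqrt e / 8"
  have s0: "s > 0" using e by (simp add: s_def)
  have s2: "58 * s\<^sup>2 \<le> e" using e by (simp add: s_def power_divide)
  define \<eta> where "\<eta> = l * s powr q"
  have eta0: "\<eta> > 0" using l_pos s0 by (simp add: \<eta>_def)
  obtain \<rho> where rho0: "\<rho> > 0"
    and rho: "\<forall>A\<in>sets M. measure M A \<le> \<rho> \<longrightarrow> (\<integral>x. indicator A x * V x powr q \<partial>M) \<le> \<eta>"
    using ui_small[OF \<open>prob_space M\<close> Vqi _ eta0] by auto
  obtain R :: nat where R: "\<forall>r\<ge>R. \<forall>b\<in>Pi_pts r B.
                   real r powr (- 1 / (2 + \<xi>)) * (\<Sum>i=2..r. \<bar>m (b i) - m (b (i - 1))\<bar>) \<le> s/2"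
    using cond_i BB s0 by (meson half_gt_zero)
  define W where "W = max (1/s) (Osc/s)"
  have W0: "W > 0" using s0 by (simp add: W_def less_max_iff_disj)
  obtain N0 :: nat where N0: "max (K/\<rho>) (W powr q) \<le> real N0" using real_arch_simple by blast
  define H0 where "H0 = max N0 (R + 3)"
  show "\<exists>H0. \<forall>H\<ge>H0. \<forall>a\<in>A_part M Y H l K.
           real H powr (- 2 / (2 + \<xi>)) *
           (\<Sum>h=1..H. cond_var_event M (\<lambda>\<omega>. m (Y \<omega>))
                {\<omega>\<in>space M. a h < ereal (Y \<omega>) \<and> ereal (Y \<omega>) \<le> a (Suc h)}) \<le> e"
  proof (intro exI allI impI ballI)
    fix H :: nat and a assume H: "H0 \<le> H" and aA: "a \<in> A_part M Y H l K"
    have H3: "H \<ge> 3" "H \<ge> R + 3" using H by (auto simp: H0_def)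
    have Hpos: "real H > 0" using H3 by simp
    have HK: "K / real H \<le> \<rho>"
    proof -
      have "K / \<rho> \<le> real H" using N0 H by (auto simp: H0_def)
      then show ?thesis using rho0 Hpos by (simp add: divide_le_eq mult.commute)
    qed
    define w where "w = real H powr (1/q)"
    have w0: "w > 0" using Hpos by (simp add: w_def)
    have wq: "w powr q = real H" using Hpos q2 by (simp add: w_def powr_powr)
    have wW: "W \<le> w"
    proof -
      have "W powr q \<le> real H" using N0 H by (auto simp: H0_def)
      then have "(W powr q) powr (1/q) \<le> real H powr (1/q)" using q2 by (intro powr_mono2) auto
      then show ?thesis using W0 q2 by (simp add: powr_powr w_def)
    qed
    define u where "u = s * w"
    have u1: "1 \<le> u" and uO: "Osc \<le> u"
    proof -
      have "1/s \<le> w" "Osc/s \<le> w" using wW by (auto simp: W_def)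
      then show "1 \<le> u" "Osc \<le> u" using s0 by (auto simp: u_def divide_le_eq mult.commute)
    qed
    have u0: "u > 0" using u1 by simp
    have uq: "u powr q = s powr q * real H" using s0 w0 by (simp add: u_def powr_mult wq)
    have fin: "real H powr (- 2 / (2 + \<xi>)) * (58 * u\<^sup>2) \<le> e"
    proof -
      have one: "real H powr (- 2 / (2 + \<xi>)) * w\<^sup>2 = 1"
      proof -
        have "w\<^sup>2 = real H powr (2/q)" using Hpos
          by (simp add: w_def power2_eq_square powr_add[symmetric])
        then show ?thesis using Hpos by (simp add: q_def powr_add[symmetric])
      qed
      have "real H powr (- 2 / (2 + \<xi>)) * (58 * u\<^sup>2) = 58 * s\<^sup>2 * (real H powr (- 2 / (2 + \<xi>)) * w\<^sup>2)"
        unfolding u_def power_mult_distrib by (simp only: ac_simps)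
      also have "\<dots> = 58 * s\<^sup>2" using one by simp
      finally show ?thesis using s2 by simp
    qed
    have a1: "a 1 = - \<infinity>" and aH1: "a (Suc H) = \<infinity>"
      and amon: "\<forall>h\<in>{1..H}. a h \<le> a (Suc h)"
      and aprob: "\<forall>h\<in>{1..H}. l / real H \<le> measure M {\<omega>\<in>space M. a h \<le> ereal (Y \<omega>) \<and> ereal (Y \<omega>) \<le> a (Suc h)}
                \<and> measure M {\<omega>\<in>space M. a h \<le> ereal (Y \<omega>) \<and> ereal (Y \<omega>) \<le> a (Suc h)} \<le> K / real H"
      using aA unfolding A_part_def by auto
    define C where "C = (\<lambda>h. {\<omega>\<in>space M. a h \<le> ereal (Y \<omega>) \<and> ereal (Y \<omega>) \<le> a (Suc h)})"
    define S where "S = (\<lambda>h. {\<omega>\<in>space M. a h < ereal (Y \<omega>) \<and> ereal (Y \<omega>) \<le> a (Suc h)})"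
    have Cprob: "\<And>h. h \<in> {1..H} \<Longrightarrow> l / real H \<le> measure M (C h) \<and> measure M (C h) \<le> K / real H"
      using aprob unfolding C_def by blast
    have lH: "l / real H > 0" using l_pos Hpos by simp
    have Cm: "\<And>h. C h \<in> sets M" unfolding C_def using Ym by measurable
    have Sm: "\<And>h. S h \<in> sets M" unfolding S_def using Ym by measurable
    have amono: "\<And>i j. 1 \<le> i \<Longrightarrow> i \<le> j \<Longrightarrow> j \<le> Suc H \<Longrightarrow> a i \<le> a j"
    proof -
      fix i j :: nat assume ij: "1 \<le> i" "i \<le> j" "j \<le> Suc H"
      show "a i \<le> a j" using ij(2,3)
      proof (induction j rule: dec_induct)
        case base then show ?case by simp
      next
        case (step n)
        then have "a n \<le> a (Suc n)" using amon ij(1) by auto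
        then show ?case using step by auto
      qed
    qed
    have a2: "a 2 \<noteq> - \<infinity>"
    proof
      assume "a 2 = - \<infinity>"
      then have "C 1 = {}" by (auto simp: C_def numeral_2_eq_2)
      then show False using Cprob[of 1] lH H3 by auto
    qed
    have aH: "a H \<noteq> \<infinity>"
    proof
      assume "a H = \<infinity>"
      then have "C H = {}" by (auto simp: C_def)
      then show False using Cprob[of H] lH H3 by auto
    qed
    define \<alpha> where "\<alpha> = (\<lambda>h. real_of_ereal (a h))"
    have afin: "\<And>h. 2 \<le> h \<Longrightarrow> h \<le> H \<Longrightarrow> a h = ereal (\<alpha> h)"
    proof -
      fix h :: nat assume h: "2 \<le> h" "h \<le> H"
      have "a 2 \<le> a h" "a h \<le> a H" using amono h by auto
      then have "\<bar>a h\<bar> \<noteq> \<infinity>" using a2 aH by (auto simp: abs_neq_infinity_cases)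
      then show "a h = ereal (\<alpha> h)" unfolding \<alpha>_def by (simp add: ereal_real)
    qed
    have \<alpha>mono: "\<And>i j. 2 \<le> i \<Longrightarrow> i \<le> j \<Longrightarrow> j \<le> H \<Longrightarrow> \<alpha> i \<le> \<alpha> j"
    proof -
      fix i j :: nat assume "2 \<le> i" "i \<le> j" "j \<le> H"
      moreover have "a i \<le> a j" using amono \<open>2 \<le> i\<close> \<open>i \<le> j\<close> \<open>j \<le> H\<close> by auto
      moreover have "a i = ereal (\<alpha> i)" "a j = ereal (\<alpha> j)" using afin \<open>2 \<le> i\<close> \<open>i \<le> j\<close> \<open>j \<le> H\<close> by auto
      ultimately show "\<alpha> i \<le> \<alpha> j" by simp
    qed
    have Sprob: "\<And>h. h \<in> {1..H} \<Longrightarrow> l / real H \<le> measure M (S h) \<and> measure M (S h) \<le> K / real H"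
    proof -
      fix h assume h: "h \<in> {1..H}"
      have SC: "S h \<subseteq> C h" by (auto simp: S_def C_def)
      define E0 where "E0 = {\<omega>\<in>space M. Y \<omega> = real_of_ereal (a h)}"
      have E0m: "E0 \<in> sets M" unfolding E0_def using Ym by measurable
      have E00: "measure M E0 = 0" using Y_cont unfolding E0_def by blast
      have CS: "C h \<subseteq> S h \<union> E0"
      proof
        fix \<omega> assume "\<omega> \<in> C h"
        then show "\<omega> \<in> S h \<union> E0" unfolding C_def S_def E0_def
          by (cases "a h = ereal (Y \<omega>)") (auto simp: order.order_iff_strict)
      qed
      have "measure M (C h) \<le> measure M (S h \<union> E0)"
        using CS Sm E0m by (intro P.finite_measure_mono) auto
      also have "\<dots> \<le> measure M (S h) + measure M E0"
        using Sm E0m by (intro measure_Un_le) auto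
      finally have "measure M (C h) \<le> measure M (S h)" using E00 by simp
      moreover have "measure M (S h) \<le> measure M (C h)" using SC Cm by (intro P.finite_measure_mono) auto
      ultimately show "l / real H \<le> measure M (S h) \<and> measure M (S h) \<le> K / real H"
        using Cprob[OF h] by auto
    qed
    have S1: "S 1 = {\<omega>\<in>space M. Y \<omega> \<le> \<alpha> 2}"
      using a1 afin[of 2] H3 by (auto simp: S_def numeral_2_eq_2)
    have SH: "S H = {\<omega>\<in>space M. \<alpha> H < Y \<omega>}"
      using aH1 afin[of H] H3 by (auto simp: S_def)
    have Smid: "\<And>h. h \<in> {2..H-1} \<Longrightarrow> S h = {\<omega>\<in>space M. \<alpha> h < Y \<omega> \<and> Y \<omega> \<le> \<alpha> (Suc h)}"
    proof -
      fix h assume h: "h \<in> {2..H-1}"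
      then have "a h = ereal (\<alpha> h)" "a (Suc h) = ereal (\<alpha> (Suc h))" using afin H3 by auto
      then show "S h = {\<omega>\<in>space M. \<alpha> h < Y \<omega> \<and> Y \<omega> \<le> \<alpha> (Suc h)}" by (auto simp: S_def)
    qed
    have C1: "C 1 = {\<omega>\<in>space M. Y \<omega> \<le> \<alpha> 2}"
      using a1 afin[of 2] H3 by (auto simp: C_def numeral_2_eq_2)
    have CH: "C H = {\<omega>\<in>space M. \<alpha> H \<le> Y \<omega>}"
      using aH1 afin[of H] H3 by (auto simp: C_def)
    define GR where "GR = \<phi> (\<alpha> H) - mt B"
    define GL where "GL = \<phi> (- \<alpha> 2) - mt B"
    have GR0: "GR \<ge> 0" and GL0: "GL \<ge> 0" using \<phi>ge by (auto simp: GR_def GL_def)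
    have Gbnd: "g0 \<le> u" if T: "T \<in> sets M" "l / real H \<le> measure M T" "measure M T \<le> K / real H"
      and g0: "0 \<le> g0" "\<forall>\<omega>\<in>T. g0 \<le> V \<omega>" for T g0
    proof (rule ccontr)
      assume "\<not> g0 \<le> u"
      then have gu: "u < g0" by simp
      have "measure M T \<le> \<rho>" using T HK by linarith
      then have int: "(\<integral>x. indicator T x * V x powr q \<partial>M) \<le> \<eta>" using rho T by blast
      have iT: "integrable M (indicator T :: 'a \<Rightarrow> real)"
        using T by (intro integrable_real_indicator) (auto simp: less_top[symmetric])
      have "(\<integral>x. indicator T x * g0 powr q \<partial>M) \<le> (\<integral>x. indicator T x * V x powr q \<partial>M)"
      proof (rule integral_mono)
        show "integrable M (\<lambda>x. indicator T x * g0 powr q)" using iT by simp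
        show "integrable M (\<lambda>x. indicator T x * V x powr q)"
          using integrable_mult_indicator[OF T(1) Vqi] by simp
        fix x show "indicator T x * g0 powr q \<le> indicator T x * V x powr q"
          using g0 q2 by (auto simp: indicator_def intro!: powr_mono2)
      qed
      moreover have "(\<integral>x. indicator T x * g0 powr q \<partial>M) = g0 powr q * measure M T"
        using T sets.sets_into_space[OF T(1)] by (simp add: Int_absorb2 mult.commute)
      ultimately have "g0 powr q * measure M T \<le> \<eta>" using int by linarith
      moreover have "u powr q * (l / real H) < g0 powr q * measure M T"
      proof -
        have "u powr q < g0 powr q" using gu u0 q2 by (intro powr_less_mono2) auto
        then have "u powr q * (l / real H) < g0 powr q * (l / real H)" using lH by (intro mult_strict_right_mono)
        also have "\<dots> \<le> g0 powr q * measure M T" using T by (intro mult_left_mono) auto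
        finally show ?thesis .
      qed
      moreover have "u powr q * (l / real H) = \<eta>"
        using Hpos unfolding uq \<eta>_def by simp
      ultimately show False by linarith
    qed
    have GRu: "GR \<le> u"
    proof (rule Gbnd[of "C H"])
      show "C H \<in> sets M" by (rule Cm)
      show "l / real H \<le> measure M (C H)" "measure M (C H) \<le> K / real H" using Cprob[of H] H3 by auto
      show "0 \<le> GR" by (rule GR0)
      show "\<forall>\<omega>\<in>C H. GR \<le> V \<omega>"
        unfolding CH GR_def V_def using \<phi>mono by (auto intro!: monoD[OF \<phi>mono])
    qed
    have GLu: "GL \<le> u"
    proof (rule Gbnd[of "C 1"])
      show "C 1 \<in> sets M" by (rule Cm)
      show "l / real H \<le> measure M (C 1)" "measure M (C 1) \<le> K / real H" using Cprob[of 1] H3 by auto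
      show "0 \<le> GL" by (rule GL0)
      show "\<forall>\<omega>\<in>C 1. GL \<le> V \<omega>"
        unfolding C1 GL_def V_def using \<phi>mono by (auto intro!: monoD[OF \<phi>mono])
    qed
    define Z where "Z = (\<lambda>\<omega>. m (Y \<omega>))"
    have inf_slice: "cond_var_event M Z T \<le> 21 * u\<^sup>2"
      if T: "T \<in> sets M" "l / real H \<le> measure M T" "measure M T \<le> K / real H"
      and c: "\<forall>\<omega>\<in>T. \<bar>Z \<omega> - c\<bar> \<le> Osc + (GR + GL) + V \<omega>" for T c
    proof -
      define G where "G = GR + GL"
      have G0: "0 \<le> G" "G \<le> 2 * u" using GR0 GL0 GRu GLu by (auto simp: G_def)
      define D where "D = (\<lambda>\<omega>. 3 * (Osc\<^sup>2 + G\<^sup>2 + (V \<omega>)\<^sup>2))"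
      have Dm: "D \<in> borel_measurable M" unfolding D_def using Vm by measurable
      have Di: "integrable M D" unfolding D_def using V2i by auto
      have TP: "measure M T > 0" using T lH by linarith
      have "cond_var_event M Z T \<le> (\<integral>\<omega>. indicator T \<omega> * D \<omega> \<partial>M) / measure M T"
      proof (rule cv_bound[OF \<open>prob_space M\<close> T(1) TP _ Dm])
        show "Z \<in> borel_measurable M" using Zm by (simp add: Z_def)
        show "integrable M (\<lambda>\<omega>. indicator T \<omega> * D \<omega>)"
          using integrable_mult_indicator[OF T(1) Di] by simp
        fix \<omega> assume "\<omega> \<in> T"
        then have "\<bar>Z \<omega> - c\<bar> \<le> Osc + G + V \<omega>" using c by (simp add: G_def)
        then have "(Z \<omega> - c)\<^sup>2 \<le> (Osc + G + V \<omega>)\<^sup>2"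
          by (metis abs_ge_zero power2_abs power_mono)
        also have "\<dots> \<le> 3 * (Osc\<^sup>2 + G\<^sup>2 + (V \<omega>)\<^sup>2)" by (rule sq3)
        finally show "(Z \<omega> - c)\<^sup>2 \<le> D \<omega>" by (simp add: D_def)
      qed
      also have "\<dots> \<le> 21 * u\<^sup>2"
      proof -
        have iT: "integrable M (indicator T :: 'a \<Rightarrow> real)"
          using T by (intro integrable_real_indicator) (auto simp: less_top[symmetric])
        have iTV: "integrable M (\<lambda>x. indicator T x * V x powr q)"
          using integrable_mult_indicator[OF T(1) Vqi] by simp
        have uxi: "u powr \<xi> > 0" using u0 by simp
        have "(\<integral>\<omega>. indicator T \<omega> * D \<omega> \<partial>M) \<le>
              (\<integral>\<omega>. (3 * (Osc\<^sup>2 + G\<^sup>2) + 3 * u\<^sup>2) * indicator T \<omega> + (3 / u powr \<xi>) * (indicator T \<omega> * V \<omega> powr q) \<partial>M)"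
        proof (rule integral_mono)
          show "integrable M (\<lambda>\<omega>. indicator T \<omega> * D \<omega>)"
            using integrable_mult_indicator[OF T(1) Di] by simp
          show "integrable M (\<lambda>\<omega>. (3 * (Osc\<^sup>2 + G\<^sup>2) + 3 * u\<^sup>2) * indicator T \<omega> + (3 / u powr \<xi>) * (indicator T \<omega> * V \<omega> powr q))"
            using iT iTV by auto
          fix \<omega>
          have "(V \<omega>)\<^sup>2 \<le> u\<^sup>2 + V \<omega> powr q / u powr \<xi>"
          proof (cases "V \<omega> \<le> u")
            case True
            then have "(V \<omega>)\<^sup>2 \<le> u\<^sup>2" using V0[of \<omega>] by (simp add: power_mono)
            moreover have "0 \<le> V \<omega> powr q / u powr \<xi>" by simp
            ultimately show ?thesis by linarith
          next
            case False
            then have Vp: "V \<omega> > 0" using u0 by simp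
            have "V \<omega> powr q = V \<omega> powr 2 * V \<omega> powr \<xi>" by (simp add: q_def powr_add)
            also have "\<dots> \<ge> V \<omega> powr 2 * u powr \<xi>"
              using False u0 xi_pos by (intro mult_left_mono powr_mono2) auto
            finally have "V \<omega> powr 2 \<le> V \<omega> powr q / u powr \<xi>" using uxi by (simp add: le_divide_eq)
            moreover have "V \<omega> powr 2 = (V \<omega>)\<^sup>2" using powr_realpow[OF Vp, of 2] by simp
            moreover have "0 \<le> u\<^sup>2" by simp
            ultimately show ?thesis by linarith
          qed
          then show "indicator T \<omega> * D \<omega> \<le> (3 * (Osc\<^sup>2 + G\<^sup>2) + 3 * u\<^sup>2) * indicator T \<omega> + (3 / u powr \<xi>) * (indicator T \<omega> * V \<omega> powr q)"
            by (auto simp: D_def indicator_def algebra_simps)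
        qed
        also have "\<dots> = (3 * (Osc\<^sup>2 + G\<^sup>2) + 3 * u\<^sup>2) * measure M T + (3 / u powr \<xi>) * (\<integral>\<omega>. indicator T \<omega> * V \<omega> powr q \<partial>M)"
          using iT iTV T sets.sets_into_space[OF T(1)] by (simp add: Int_absorb2)
        also have "\<dots> \<le> (3 * (Osc\<^sup>2 + G\<^sup>2) + 3 * u\<^sup>2) * measure M T + (3 / u powr \<xi>) * \<eta>"
        proof -
          have "measure M T \<le> \<rho>" using T HK by linarith
          then have "(\<integral>x. indicator T x * V x powr q \<partial>M) \<le> \<eta>" using rho T by blast
          then show ?thesis using uxi by (intro add_left_mono mult_left_mono) auto
        qed
        finally have I0: "(\<integral>\<omega>. indicator T \<omega> * D \<omega> \<partial>M) \<le>
            (3 * (Osc\<^sup>2 + G\<^sup>2) + 3 * u\<^sup>2) * measure M T + (3 / u powr \<xi>) * \<eta>" .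
        have "(\<integral>\<omega>. indicator T \<omega> * D \<omega> \<partial>M) / measure M T \<le>
            ((3 * (Osc\<^sup>2 + G\<^sup>2) + 3 * u\<^sup>2) * measure M T + (3 / u powr \<xi>) * \<eta>) / measure M T"
          using TP I0 by (intro divide_right_mono) auto
        also have "\<dots> = (3 * (Osc\<^sup>2 + G\<^sup>2) + 3 * u\<^sup>2) + (3 / u powr \<xi>) * \<eta> / measure M T"
          using TP by (simp add: add_divide_distrib)
        finally have I: "(\<integral>\<omega>. indicator T \<omega> * D \<omega> \<partial>M) / measure M T \<le>
            (3 * (Osc\<^sup>2 + G\<^sup>2) + 3 * u\<^sup>2) + (3 / u powr \<xi>) * \<eta> / measure M T" .
        have "(3 / u powr \<xi>) * \<eta> / measure M T \<le> (3 / u powr \<xi>) * \<eta> / (l / real H)"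
        proof (rule divide_left_mono)
          show "l / real H \<le> measure M T" using T by simp
          show "0 \<le> 3 / u powr \<xi> * \<eta>" using uxi eta0 by simp
          show "0 < measure M T * (l / real H)" using TP lH by (rule mult_pos_pos)
        qed
        also have "\<dots> = 3 * u\<^sup>2"
        proof -
          have "\<eta> / (l / real H) = u powr q" using l_pos Hpos by (simp add: \<eta>_def uq)
          moreover have "u powr q / u powr \<xi> = u\<^sup>2"
          proof -
            have "u powr q = u powr 2 * u powr \<xi>" by (simp add: q_def powr_add)
            moreover have "u powr 2 = u\<^sup>2" using powr_realpow[OF u0, of 2] by simp
            ultimately show ?thesis using u0 by simp
          qed
          moreover have "(3 / u powr \<xi>) * \<eta> / (l / real H) = 3 * ((\<eta> / (l / real H)) / u powr \<xi>)"
            using u0 l_pos Hpos by (simp add: field_simps)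
          ultimately show ?thesis by simp
        qed
        finally have II: "(3 / u powr \<xi>) * \<eta> / measure M T \<le> 3 * u\<^sup>2" .
        have "Osc\<^sup>2 \<le> u\<^sup>2" using uO O0 by (simp add: power_mono)
        moreover have "G\<^sup>2 \<le> (2*u)\<^sup>2" using power_mono[OF G0(2) G0(1), of 2] .
        ultimately show ?thesis using I II by (simp add: power_mult_distrib)
      qed
      finally show ?thesis .
    qed
    have var1: "cond_var_event M Z (S 1) \<le> 21 * u\<^sup>2"
    proof (rule inf_slice[of "S 1" "m (\<alpha> 2)"])
      show "S 1 \<in> sets M" by (rule Sm)
      show "l / real H \<le> measure M (S 1)" "measure M (S 1) \<le> K / real H" using Sprob[of 1] H3 by auto
      show "\<forall>\<omega>\<in>S 1. \<bar>Z \<omega> - m (\<alpha> 2)\<bar> \<le> Osc + (GR + GL) + V \<omega>"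
      proof
        fix \<omega> assume "\<omega> \<in> S 1"
        then have y: "Y \<omega> \<le> \<alpha> 2" unfolding S1 by auto
        have k: "\<bar>m (Y \<omega>) - m (\<alpha> 2)\<bar> \<le> \<bar>m (clamp B (Y \<omega>)) - m (clamp B (\<alpha> 2))\<bar> + (\<phi> (\<alpha> 2) - \<phi> (Y \<omega>))
            + (\<phi> (- Y \<omega>) - \<phi> (- \<alpha> 2))"
          using key_bound[OF BB(1) B0 mtmono tail y] unfolding \<phi>_def by simp
        have "\<phi> (\<alpha> 2) \<le> \<phi> (\<alpha> H)" using \<alpha>mono[of 2 H] H3 by (intro monoD[OF \<phi>mono]) auto
        moreover have "\<phi> (- Y \<omega>) \<le> \<phi> \<bar>Y \<omega>\<bar>" by (intro monoD[OF \<phi>mono]) auto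
        ultimately show "\<bar>Z \<omega> - m (\<alpha> 2)\<bar> \<le> Osc + (GR + GL) + V \<omega>"
          using k Ob[of "Y \<omega>" "\<alpha> 2"] \<phi>ge[of "Y \<omega>"] \<phi>ge[of "- \<alpha> 2"] GL0
          unfolding Z_def GR_def V_def by linarith
      qed
    qed
    have varH: "cond_var_event M Z (S H) \<le> 21 * u\<^sup>2"
    proof (rule inf_slice[of "S H" "m (\<alpha> H)"])
      show "S H \<in> sets M" by (rule Sm)
      show "l / real H \<le> measure M (S H)" "measure M (S H) \<le> K / real H" using Sprob[of H] H3 by auto
      show "\<forall>\<omega>\<in>S H. \<bar>Z \<omega> - m (\<alpha> H)\<bar> \<le> Osc + (GR + GL) + V \<omega>"
      proof
        fix \<omega> assume "\<omega> \<in> S H"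
        then have y: "\<alpha> H \<le> Y \<omega>" unfolding SH by auto
        have k: "\<bar>m (\<alpha> H) - m (Y \<omega>)\<bar> \<le> \<bar>m (clamp B (\<alpha> H)) - m (clamp B (Y \<omega>))\<bar> + (\<phi> (Y \<omega>) - \<phi> (\<alpha> H))
            + (\<phi> (- \<alpha> H) - \<phi> (- Y \<omega>))"
          using key_bound[OF BB(1) B0 mtmono tail y] unfolding \<phi>_def by simp
        have "\<phi> (- \<alpha> H) \<le> \<phi> (- \<alpha> 2)" using \<alpha>mono[of 2 H] H3 by (intro monoD[OF \<phi>mono]) auto
        moreover have "\<phi> (Y \<omega>) \<le> \<phi> \<bar>Y \<omega>\<bar>" by (intro monoD[OF \<phi>mono]) auto
        ultimately show "\<bar>Z \<omega> - m (\<alpha> H)\<bar> \<le> Osc + (GR + GL) + V \<omega>"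
          using k Ob[of "\<alpha> H" "Y \<omega>"] \<phi>ge[of "- Y \<omega>"] \<phi>ge[of "\<alpha> H"] GR0
          unfolding Z_def GL_def V_def by (simp add: abs_minus_commute)
      qed
    qed
    define fM where "fM = (\<lambda>h y. \<bar>m (clamp B y) - m (clamp B (\<alpha> (Suc h)))\<bar>)"
    define Mh where "Mh = (\<lambda>h. Sup (fM h ` {\<alpha> h..\<alpha> (Suc h)}))"
    define A where "A = (\<lambda>h. (\<phi> (\<alpha> (Suc h)) - \<phi> (\<alpha> h)) + (\<phi> (- \<alpha> h) - \<phi> (- \<alpha> (Suc h))))"
    have hle: "\<And>h. h \<in> {2..H-1} \<Longrightarrow> \<alpha> h \<le> \<alpha> (Suc h)" using \<alpha>mono H3 by auto
    have bdd: "\<And>h. bdd_above (fM h ` {\<alpha> h..\<alpha> (Suc h)})"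
      using Ob unfolding fM_def by (auto intro!: bdd_aboveI2)
    have Mup: "\<And>h y. y \<in> {\<alpha> h..\<alpha> (Suc h)} \<Longrightarrow> fM h y \<le> Mh h"
      unfolding Mh_def using bdd by (intro cSup_upper) auto
    have M0: "\<And>h. h \<in> {2..H-1} \<Longrightarrow> 0 \<le> Mh h"
    proof -
      fix h assume h: "h \<in> {2..H-1}"
      have "fM h (\<alpha> (Suc h)) \<le> Mh h" using hle[OF h] by (intro Mup) auto
      then show "0 \<le> Mh h" by (simp add: fM_def)
    qed
    have A0: "\<And>h. h \<in> {2..H-1} \<Longrightarrow> 0 \<le> A h"
    proof -
      fix h assume h: "h \<in> {2..H-1}"
      have "\<phi> (\<alpha> h) \<le> \<phi> (\<alpha> (Suc h))" "\<phi> (- \<alpha> (Suc h)) \<le> \<phi> (- \<alpha> h)"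
        using hle[OF h] by (auto intro!: monoD[OF \<phi>mono])
      then show "0 \<le> A h" by (simp add: A_def)
    qed
    have varmid: "\<And>h. h \<in> {2..H-1} \<Longrightarrow> cond_var_event M Z (S h) \<le> (Mh h + A h)\<^sup>2"
    proof -
      fix h assume h: "h \<in> {2..H-1}"
      have h1: "h \<in> {1..H}" using h by auto
      have TP: "measure M (S h) > 0" using Sprob[OF h1] lH by linarith
      have iT: "integrable M (indicator (S h) :: 'a \<Rightarrow> real)"
        using Sm by (intro integrable_real_indicator) (auto simp: less_top[symmetric])
      have "cond_var_event M Z (S h) \<le> (\<integral>\<omega>. indicator (S h) \<omega> * (Mh h + A h)\<^sup>2 \<partial>M) / measure M (S h)"
      proof (rule cv_bound[OF \<open>prob_space M\<close> Sm TP, where c="m (\<alpha> (Suc h))"])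
        show "Z \<in> borel_measurable M" using Zm by (simp add: Z_def)
        show "(\<lambda>\<omega>. (Mh h + A h)\<^sup>2) \<in> borel_measurable M" by simp
        show "integrable M (\<lambda>\<omega>. indicator (S h) \<omega> * (Mh h + A h)\<^sup>2)" using iT by simp
        fix \<omega> assume "\<omega> \<in> S h"
        then have y: "\<alpha> h < Y \<omega>" "Y \<omega> \<le> \<alpha> (Suc h)" using Smid[OF h] by auto
        have k: "\<bar>m (Y \<omega>) - m (\<alpha> (Suc h))\<bar> \<le> \<bar>m (clamp B (Y \<omega>)) - m (clamp B (\<alpha> (Suc h)))\<bar>
            + (\<phi> (\<alpha> (Suc h)) - \<phi> (Y \<omega>)) + (\<phi> (- Y \<omega>) - \<phi> (- \<alpha> (Suc h)))"
          using key_bound[OF BB(1) B0 mtmono tail y(2)] unfolding \<phi>_def by simp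
        have "fM h (Y \<omega>) \<le> Mh h" using y by (intro Mup) auto
        moreover have "\<phi> (\<alpha> h) \<le> \<phi> (Y \<omega>)" "\<phi> (- Y \<omega>) \<le> \<phi> (- \<alpha> h)"
          using y by (auto intro!: monoD[OF \<phi>mono])
        ultimately have "\<bar>Z \<omega> - m (\<alpha> (Suc h))\<bar> \<le> Mh h + A h"
          using k unfolding Z_def A_def fM_def by linarith
        then show "(Z \<omega> - m (\<alpha> (Suc h)))\<^sup>2 \<le> (Mh h + A h)\<^sup>2"
          by (metis abs_ge_zero power2_abs power_mono)
      qed
      also have "\<dots> = (Mh h + A h)\<^sup>2"
        using TP Sm[of h] sets.sets_into_space[OF Sm[of h]] by (simp add: Int_absorb2 mult.commute)
      finally show "cond_var_event M Z (S h) \<le> (Mh h + A h)\<^sup>2" .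
    qed
    have "\<forall>h\<in>{2..H-1}. \<exists>y. y \<in> {\<alpha> h..\<alpha> (Suc h)} \<and> Mh h - 1 / real H < fM h y"
    proof
      fix h assume h: "h \<in> {2..H-1}"
      have ne: "fM h ` {\<alpha> h..\<alpha> (Suc h)} \<noteq> {}" using hle[OF h] by auto
      have "Mh h - 1 / real H < Sup (fM h ` {\<alpha> h..\<alpha> (Suc h)})" using Hpos by (simp add: Mh_def)
      from less_cSupD[OF ne this] show "\<exists>y. y \<in> {\<alpha> h..\<alpha> (Suc h)} \<and> Mh h - 1 / real H < fM h y"
        by auto
    qed
    then obtain yf where yf: "\<And>h. h \<in> {2..H-1} \<Longrightarrow> yf h \<in> {\<alpha> h..\<alpha> (Suc h)} \<and> Mh h - 1 / real H < fM h (yf h)"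
      by metis
    define n where "n = H - 2"
    have n1: "n + 1 = H - 1" "n \<ge> 1" "2 * n \<ge> R" using H3 by (auto simp: n_def)
    have ayf: "\<forall>h\<in>{2..n+1}. \<alpha> h \<le> yf h \<and> yf h \<le> \<alpha> (h+1)"
      using yf unfolding n1(1) by auto
    obtain bb where bbP: "bb \<in> Pi_pts (2*n) B"
      and bbS: "(\<Sum>h=2..n+1. \<bar>m (clamp B (\<alpha> (h+1))) - m (clamp B (yf h))\<bar>)
          \<le> (\<Sum>i=2..2*n. \<bar>m (bb i) - m (bb (i - 1))\<bar>)"
      using mid_sum[where \<alpha>=\<alpha> and y=yf and n=n and B=B] ayf BB(2) by (meson less_imp_le)
    have sumi: "(\<Sum>i=2..2*n. \<bar>m (bb i) - m (bb (i - 1))\<bar>) \<le> u"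
    proof -
      define p where "p = real (2*n) powr (1/q)"
      have p0: "p > 0" using n1 by (simp add: p_def)
      have "real (2*n) powr (- 1 / (2 + \<xi>)) * (\<Sum>i=2..2*n. \<bar>m (bb i) - m (bb (i - 1))\<bar>) \<le> s/2"
        using R n1(3) bbP by blast
      moreover have "real (2*n) powr (- 1 / (2 + \<xi>)) = 1 / p"
        by (simp add: p_def q_def powr_minus_divide[symmetric])
      ultimately have "(\<Sum>i=2..2*n. \<bar>m (bb i) - m (bb (i - 1))\<bar>) / p \<le> s/2" by simp
      then have I: "(\<Sum>i=2..2*n. \<bar>m (bb i) - m (bb (i - 1))\<bar>) \<le> s/2 * p" using p0 by (simp add: divide_le_eq)
      have "p \<le> (2 * real H) powr (1/q)" unfolding p_def using q2 n1 by (intro powr_mono2) (auto simp: n_def)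
      also have "\<dots> = 2 powr (1/q) * w" by (simp add: powr_mult w_def)
      also have "\<dots> \<le> 2 * w"
      proof -
        have "2 powr (1/q) \<le> 2 powr 1" using q2 by (intro powr_mono) auto
        then show ?thesis using w0 by (intro mult_right_mono) auto
      qed
      finally have "s/2 * p \<le> s/2 * (2 * w)" using s0 by (intro mult_left_mono) auto
      then show ?thesis using I by (simp add: u_def)
    qed
    have SM: "(\<Sum>h=2..H-1. Mh h) \<le> 2 * u"
    proof -
      have "(\<Sum>h=2..H-1. Mh h) \<le> (\<Sum>h=2..H-1. fM h (yf h) + 1 / real H)"
      proof (rule sum_mono)
        fix h assume "h \<in> {2..H-1}"
        then have "Mh h - 1 / real H < fM h (yf h)" using yf by blast
        then show "Mh h \<le> fM h (yf h) + 1 / real H" by linarith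
      qed
      also have "\<dots> = (\<Sum>h=2..H-1. fM h (yf h)) + real (H - 2) / real H"
        using H3 by (simp add: sum.distrib)
      also have "(\<Sum>h=2..H-1. fM h (yf h)) = (\<Sum>h=2..n+1. \<bar>m (clamp B (\<alpha> (h+1))) - m (clamp B (yf h))\<bar>)"
        unfolding n1(1) fM_def by (simp add: abs_minus_commute)
      also have "real (H - 2) / real H \<le> 1" using Hpos by (simp add: divide_le_eq)
      finally show ?thesis using bbS sumi u1 by linarith
    qed
    have SA: "(\<Sum>h=2..H-1. A h) \<le> 2 * u"
    proof -
      have "(\<Sum>h=2..H-1. A h) = (\<Sum>h=2..H-1. \<phi> (\<alpha> (Suc h)) - \<phi> (\<alpha> h)) - (\<Sum>h=2..H-1. \<phi> (- \<alpha> (Suc h)) - \<phi> (- \<alpha> h))"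
        unfolding A_def by (simp add: sum.distrib sum_subtractf)
      also have "\<dots> = (\<phi> (\<alpha> H) - \<phi> (\<alpha> 2)) - (\<phi> (- \<alpha> H) - \<phi> (- \<alpha> 2))"
        using sum_Suc_diff[of 2 "H-1" "\<lambda>h. \<phi> (\<alpha> h)"] sum_Suc_diff[of 2 "H-1" "\<lambda>h. \<phi> (- \<alpha> h)"] H3
        by (simp add: Suc_diff_1)
      also have "\<dots> \<le> GR + GL" using \<phi>ge[of "\<alpha> 2"] \<phi>ge[of "- \<alpha> H"] by (simp add: GR_def GL_def)
      finally show ?thesis using GRu GLu by linarith
    qed
    have finsum: "(\<Sum>h=2..H-1. cond_var_event M Z (S h)) \<le> 16 * u\<^sup>2"
    proof -
      have "(\<Sum>h=2..H-1. cond_var_event M Z (S h)) \<le> (\<Sum>h=2..H-1. 2 * (Mh h)\<^sup>2 + 2 * (A h)\<^sup>2)"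
      proof (rule sum_mono)
        fix h assume h: "h \<in> {2..H-1}"
        have "(Mh h + A h)\<^sup>2 \<le> 2 * (Mh h)\<^sup>2 + 2 * (A h)\<^sup>2"
        proof -
          have "0 \<le> (Mh h - A h)\<^sup>2" by simp
          then show ?thesis by (simp add: power2_eq_square algebra_simps)
        qed
        then show "cond_var_event M Z (S h) \<le> 2 * (Mh h)\<^sup>2 + 2 * (A h)\<^sup>2" using varmid[OF h] by linarith
      qed
      also have "\<dots> = 2 * (\<Sum>h=2..H-1. (Mh h)\<^sup>2) + 2 * (\<Sum>h=2..H-1. (A h)\<^sup>2)"
        by (simp add: sum.distrib sum_distrib_left)
      also have "\<dots> \<le> 2 * (\<Sum>h=2..H-1. Mh h)\<^sup>2 + 2 * (\<Sum>h=2..H-1. A h)\<^sup>2"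
        using sumsq_le[of "{2..H-1}" Mh] sumsq_le[of "{2..H-1}" A] M0 A0 by auto
      also have "\<dots> \<le> 2 * (2 * u)\<^sup>2 + 2 * (2 * u)\<^sup>2"
      proof -
        have "0 \<le> (\<Sum>h=2..H-1. Mh h)" "0 \<le> (\<Sum>h=2..H-1. A h)" using M0 A0 by (auto intro: sum_nonneg)
        then have "(\<Sum>h=2..H-1. Mh h)\<^sup>2 \<le> (2 * u)\<^sup>2" "(\<Sum>h=2..H-1. A h)\<^sup>2 \<le> (2 * u)\<^sup>2"
          using power_mono[OF SM, of 2] power_mono[OF SA, of 2] by auto
        then show ?thesis by linarith
      qed
      also have "\<dots> = 16 * u\<^sup>2" by (simp add: power_mult_distrib)
      finally show ?thesis .
    qed
    have split: "(\<Sum>h=1..H. cond_var_event M Z (S h)) =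
        cond_var_event M Z (S 1) + (\<Sum>h=2..H-1. cond_var_event M Z (S h)) + cond_var_event M Z (S H)"
    proof -
      have "{1..H} = insert 1 (insert H {2..H-1})" using H3 by auto
      then show ?thesis using H3 by simp
    qed
    have total: "(\<Sum>h=1..H. cond_var_event M Z (S h)) \<le> 58 * u\<^sup>2"
      unfolding split using var1 varH finsum by linarith
    have eq: "(\<Sum>h=1..H. cond_var_event M (\<lambda>\<omega>. m (Y \<omega>))
                {\<omega>\<in>space M. a h < ereal (Y \<omega>) \<and> ereal (Y \<omega>) \<le> a (Suc h)})
        = (\<Sum>h=1..H. cond_var_event M Z (S h))" by (simp add: S_def Z_def)
    have "real H powr (- 2 / (2 + \<xi>)) * (\<Sum>h=1..H. cond_var_event M Z (S h)) \<le> real H powr (- 2 / (2 + \<xi>)) * (58 * u\<^sup>2)"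
      using total by (intro mult_left_mono) auto
    then show "real H powr (- 2 / (2 + \<xi>)) * (\<Sum>h=1..H. cond_var_event M (\<lambda>\<omega>. m (Y \<omega>)) {\<omega>\<in>space M. a h < ereal (Y \<omega>) \<and> ereal (Y \<omega>) \<le> a (Suc h)}) \<le> e"
      unfolding eq using fin by linarith
  qed
qed


end
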